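(* Let $P=MN_P$ be a standard parabolic subgroup of $G$, $\pi\in\Pi_{\mathrm{disc}}(M)$, $Q\subset R$ standard parabolic subgroups and $w,w'\in{}_QW_P$ with $P_\pi\subset P_w\cap P_{w'}$. Then the map $$(\lambda,\lambda')\mapsto(\hat\theta_Q^R\theta_R)(w\lambda+w'\lambda'+w\nu^P_{P_w}+w'\nu^P_{P_{w'}})$$ does not vanish identically on $i\mathfrak a_P^{G,*}\times i\mathfrak a_P^{G,*}$.
   Context: $F$ is a number field, $G=\mathrm{GL}_n$ over $F$, $P_0$ the upper triangular Borel, $W\cong\mathfrak S_n$, $\mathfrak a_0=\mathbb R^n$ (identified with its dual via the standard inner product). For standard $Q\subset R$: $\Delta_Q^R$ the simple roots of $A_Q$ in $M_R\cap N_Q$, $\Delta_R^\vee$ the simple coroots of $R$, $\hat\Delta_Q^{R,\vee}\subset\mathfrak a_Q^R$ the basis dual to $\Delta_Q^R$ (simple coweights); $\theta_R(\mu)=\mathrm{vol}(\mathfrak a_R^G/\mathbb Z(\Delta_R^\vee))^{-1}\prod_{\alpha\in\Delta_R}\langle\mu,\alpha^\vee\rangle$ and $\hat\theta_Q^R(\mu)=\mathrm{vol}(\mathfrak a_Q^R/\mathbb Z(\hat\Delta_Q^{R,\vee}))^{-1}\prod_{\varpi^\vee\in\hat\Delta_Q^{R,\vee}}\langle\mu,\varpi^\vee\rangle$. ${}_QW_P$ is the set of $w\in W$ with $M_P\cap w^{-1}P_0w=M_P\cap P_0$ and $M_Q\cap wP_0w^{-1}=M_Q\cap P_0$; $P_w=(M_P\cap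 w^{-1}Qw)N_P$. $\Pi_{\mathrm{disc}}(M)$: discrete automorphic representations of $M(\mathbb A)$ with central character trivial on $A_M^\infty$. Write $M=\prod G_{n_i}$, $\pi=\boxtimes\pi_i$; by Moeglin–Waldspurger $n_i=r_id_i$ with $\pi_i$ the residual representation attached to $\sigma_i^{\otimes d_i}$, $\sigma_i$ cuspidal on $\mathrm{GL}_{r_i}$; $P_\pi\subset P$ is the standard parabolic with $P_\pi\cap M=\prod P_{\pi_i}$, $P_{\pi_i}$ standard in $\mathrm{GL}_{n_i}$ with Levi $\mathrm{GL}_{r_i}^{d_i}$. For $P_\pi\subset S\subset P$, $S\cap M=\prod S_i$, $\nu_S^P=(-\rho_{S_i}^{\mathrm{GL}_{n_i}}/r_i)_i\in\mathfrak a_S^{P,*}$. *)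

theory Defs
  imports "HOL-Analysis.Analysis" "HOL-Combinatorics.Permutations"
begin

text \<open>G = GL_n, coordinates indexed by 1..n. a_0 = R^n is modelled by
  functions nat => real supported on {1..n}; complexified duals by nat => complex.
  A standard parabolic subgroup is encoded by its set D of "cut points"
  D \<subseteq> {1..n-1}: the simple roots e_c - e_(c+1) of A_0 lying in its unipotent
  radical are exactly those with c \<in> D.  Thus Q \<subseteq> R iff cuts(R) \<subseteq> cuts(Q).
  The Weyl group W = S_n is the group of permutations of {1..n}, acting by
  w e_i = e_(w i).\<close>

fun psums :: "nat list \<Rightarrow> nat list" where
  "psums [] = []"
| "psums (x # xs) = x # map ((+) x) (psums xs)"

text \<open>cut set of the standard parabolic with block sizes ns (a composition of n)\<close>
definition cuts_of :: "nat list \<Rightarrow> nat set" where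
  "cuts_of ns = set (butlast (psums ns))"

text \<open>i and j lie in the same block of the standard Levi with cut set D\<close>
definition same_block :: "nat set \<Rightarrow> nat \<Rightarrow> nat \<Rightarrow> bool" where
  "same_block D i j = (\<forall>c\<in>D. \<not> (min i j \<le> c \<and> c < max i j))"

text \<open>Data of P and of pi: a list of pairs (r_i, d_i), the i-th block of M is
  GL_(n_i) with n_i = r_i d_i, and pi_i is the residual representation attached to
  sigma_i^(d_i), sigma_i cuspidal on GL_(r_i).\<close>
definition compP :: "(nat \<times> nat) list \<Rightarrow> nat list" where
  "compP rd = map (\<lambda>(r, d). r * d) rd"

definition compPpi :: "(nat \<times> nat) list \<Rightarrow> nat list" where
  "compPpi rd = concat (map (\<lambda>(r, d). replicate d r) rd)"

text \<open>r_i for the block containing coordinate j\<close>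
definition rcoord :: "(nat \<times> nat) list \<Rightarrow> nat \<Rightarrow> nat" where
  "rcoord rd j = concat (map (\<lambda>(r, d). replicate (r * d) r) rd) ! (j - 1)"

text \<open>w \<in> _Q W_P: M_P \<inter> w^-1 P_0 w = M_P \<inter> P_0 and M_Q \<inter> w P_0 w^-1 = M_Q \<inter> P_0,
  i.e. w maps positive roots of M_P to positive roots and w^-1 maps positive roots
  of M_Q to positive roots.\<close>
definition inQWP :: "nat \<Rightarrow> nat set \<Rightarrow> nat set \<Rightarrow> (nat \<Rightarrow> nat) \<Rightarrow> bool" where
  "inQWP n DQ DP w =
     (w permutes {1..n} \<and>
      (\<forall>i j. 1 \<le> i \<longrightarrow> i < j \<longrightarrow> j \<le> n \<longrightarrow> same_block DP i j \<longrightarrow> w i < w j) \<and>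
      (\<forall>i j. 1 \<le> i \<longrightarrow> i < j \<longrightarrow> j \<le> n \<longrightarrow> same_block DQ i j \<longrightarrow> inv w i < inv w j))"

text \<open>cut set of P_w = (M_P \<inter> w^-1 Q w) N_P: the simple root e_i - e_(i+1) lies in the
  Levi of P_w iff it lies in M_P and w(e_i - e_(i+1)) is a root of M_Q.\<close>
definition Pw_cuts :: "nat \<Rightarrow> nat set \<Rightarrow> nat set \<Rightarrow> (nat \<Rightarrow> nat) \<Rightarrow> nat set" where
  "Pw_cuts n DP DQ w =
     {i \<in> {1..<n}. i \<in> DP \<or> \<not> same_block DQ (w i) (w (Suc i))}"

text \<open>rho_(S \<inter> M)^M: half sum of the roots e_a - e_b (a<b) of M = M_P lying in N_S\<close>
definition rho :: "nat \<Rightarrow> nat set \<Rightarrow> nat set \<Rightarrow> nat \<Rightarrow> real" where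
  "rho n DP DS j =
     (real (card {b \<in> {1..n}. j < b \<and> same_block DP j b \<and> \<not> same_block DS j b})
      - real (card {a \<in> {1..n}. a < j \<and> same_block DP a j \<and> \<not> same_block DS a j})) / 2"

text \<open>nu_S^P = (- rho_(S_i)^(GL_(n_i)) / r_i)_i\<close>
definition nu :: "nat \<Rightarrow> (nat \<Rightarrow> nat) \<Rightarrow> nat set \<Rightarrow> nat set \<Rightarrow> nat \<Rightarrow> real" where
  "nu n rc DP DS j = (if j \<in> {1..n} then - rho n DP DS j / real (rc j) else 0)"

definition act :: "(nat \<Rightarrow> nat) \<Rightarrow> (nat \<Rightarrow> 'a) \<Rightarrow> nat \<Rightarrow> 'a" where
  "act w \<mu> = (\<lambda>j. \<mu> (inv w j))"

definition rpair :: "nat \<Rightarrow> (nat \<Rightarrow> real) \<Rightarrow> (nat \<Rightarrow> real) \<Rightarrow> real" where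
  "rpair n v u = (\<Sum>j = 1..n. v j * u j)"

definition cpair :: "nat \<Rightarrow> (nat \<Rightarrow> complex) \<Rightarrow> (nat \<Rightarrow> real) \<Rightarrow> complex" where
  "cpair n \<mu> v = (\<Sum>j = 1..n. \<mu> j * complex_of_real (v j))"

text \<open>simple root e_c - e_(c+1) of A_0 (= its coroot under the identification)\<close>
definition alpha :: "nat \<Rightarrow> nat \<Rightarrow> real" where
  "alpha c = (\<lambda>k. if k = c then 1 else if k = Suc c then -1 else 0)"

text \<open>orthogonal projection of a_0 onto a_S (average over blocks)\<close>
definition proj :: "nat \<Rightarrow> nat set \<Rightarrow> (nat \<Rightarrow> real) \<Rightarrow> nat \<Rightarrow> real" where
  "proj n D v = (\<lambda>k. if k \<in> {1..n}
      then (\<Sum>l \<in> {l \<in> {1..n}. same_block D k l}. v l) / real (card {l \<in> {1..n}. same_block D k l})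
      else 0)"

text \<open>v \<in> a_S\<close>
definition in_a :: "nat \<Rightarrow> nat set \<Rightarrow> (nat \<Rightarrow> real) \<Rightarrow> bool" where
  "in_a n D v = ((\<forall>k. k \<notin> {1..n} \<longrightarrow> v k = 0) \<and>
     (\<forall>k l. k \<in> {1..n} \<longrightarrow> l \<in> {1..n} \<longrightarrow> same_block D k l \<longrightarrow> v k = v l))"

text \<open>v \<in> a_Q^R (kernel of a_Q -> a_R)\<close>
definition in_aQR :: "nat \<Rightarrow> nat set \<Rightarrow> nat set \<Rightarrow> (nat \<Rightarrow> real) \<Rightarrow> bool" where
  "in_aQR n DQ DR v = (in_a n DQ v \<and>
     (\<forall>k \<in> {1..n}. (\<Sum>l \<in> {l \<in> {1..n}. same_block DR k l}. v l) = 0))"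

text \<open>v \<in> a_S^G\<close>
definition in_aG :: "nat \<Rightarrow> nat set \<Rightarrow> (nat \<Rightarrow> real) \<Rightarrow> bool" where
  "in_aG n D v = (in_a n D v \<and> (\<Sum>l = 1..n. v l) = 0)"

text \<open>\<lambda> \<in> i a_S^(G,*)\<close>
definition in_iaG :: "nat \<Rightarrow> nat set \<Rightarrow> (nat \<Rightarrow> complex) \<Rightarrow> bool" where
  "in_iaG n D lam = (\<exists>x. in_aG n D x \<and> lam = (\<lambda>j. \<i> * complex_of_real (x j)))"

text \<open>Gram determinant of the family (f i)_(i \<in> S), and covolume of the lattice it
  spans in its real span (w.r.t. the measure induced by the standard inner product)\<close>
definition gram_det :: "nat \<Rightarrow> nat set \<Rightarrow> (nat \<Rightarrow> nat \<Rightarrow> real) \<Rightarrow> real" where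
  "gram_det n S f = (\<Sum>p \<in> {p. p permutes S}. real_of_int (sign p) * (\<Prod>i\<in>S. rpair n (f i) (f (p i))))"

definition covol :: "nat \<Rightarrow> nat set \<Rightarrow> (nat \<Rightarrow> nat \<Rightarrow> real) \<Rightarrow> real" where
  "covol n S f = sqrt (gram_det n S f)"

text \<open>Delta_R^vee: coroot attached to the simple root of A_R indexed by c \<in> cuts(R)\<close>
definition coroot :: "nat \<Rightarrow> nat set \<Rightarrow> nat \<Rightarrow> nat \<Rightarrow> real" where
  "coroot n DR c = proj n DR (alpha c)"

definition theta :: "nat \<Rightarrow> nat set \<Rightarrow> (nat \<Rightarrow> complex) \<Rightarrow> complex" where
  "theta n DR \<mu> = complex_of_real (1 / covol n DR (coroot n DR)) *
     (\<Prod>c\<in>DR. cpair n \<mu> (coroot n DR c))"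

text \<open>hat Delta_Q^(R,vee): basis of a_Q^R dual to Delta_Q^R\<close>
definition coweight :: "nat \<Rightarrow> nat set \<Rightarrow> nat set \<Rightarrow> nat \<Rightarrow> nat \<Rightarrow> real" where
  "coweight n DQ DR c = (THE v. in_aQR n DQ DR v \<and>
      (\<forall>d \<in> DQ - DR. rpair n (alpha d) v = (if d = c then 1 else 0)))"

definition theta_hat :: "nat \<Rightarrow> nat set \<Rightarrow> nat set \<Rightarrow> (nat \<Rightarrow> complex) \<Rightarrow> complex" where
  "theta_hat n DQ DR \<mu> = complex_of_real (1 / covol n (DQ - DR) (coweight n DQ DR)) *
     (\<Prod>c\<in>DQ - DR. cpair n \<mu> (coweight n DQ DR c))"

end

theory Submission
  imports Defs "Jordan_Normal_Form.Determinant"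
begin

lemma sb_refl[simp]: "same_block D i i"
  unfolding same_block_def by auto

lemma sb_sym: "same_block D i j = same_block D j i"
  unfolding same_block_def by (auto simp: min.commute max.commute)

lemma sb_sym': "same_block D i j \<Longrightarrow> same_block D j i"
  using sb_sym by (rule iffD1)

lemma sb_trans: "same_block D i j \<Longrightarrow> same_block D j k \<Longrightarrow> same_block D i k"
  unfolding same_block_def
proof (intro ballI notI)
  fix c assume h1: "\<forall>c\<in>D. \<not> (min i j \<le> c \<and> c < max i j)" and h2: "\<forall>c\<in>D. \<not> (min j k \<le> c \<and> c < max j k)"
    and c: "c \<in> D" "min i k \<le> c \<and> c < max i k"
  from h1 c(1) have a: "\<not> (min i j \<le> c \<and> c < max i j)" by blast
  from h2 c(1) have b: "\<not> (min j k \<le> c \<and> c < max j k)" by blast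
  show False using a b c(2) unfolding min_def max_def by (auto split: if_splits)
qed

lemma sb_step: "same_block D i (Suc i) \<longleftrightarrow> i \<notin> D"
proof
  assume "same_block D i (Suc i)" then show "i \<notin> D" unfolding same_block_def by auto
next
  assume "i \<notin> D" then show "same_block D i (Suc i)" unfolding same_block_def
    by (auto simp: min_def max_def less_Suc_eq_le)
qed

lemma sb_mono: "D \<subseteq> D' \<Longrightarrow> same_block D' i j \<Longrightarrow> same_block D i j"
  unfolding same_block_def by auto

lemma chain_eq: "a \<le> b \<Longrightarrow> (\<And>i. a \<le> i \<Longrightarrow> i < b \<Longrightarrow> g i = g (Suc i)) \<Longrightarrow> g a = g b"
proof (induction b)
  case 0 then show ?case by simp
next
  case (Suc b)
  show ?case
  proof (cases "a = Suc b")
    case True then show ?thesis by simp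
  next
    case False
    then have "a \<le> b" using Suc by simp
    then have "g a = g b" using Suc by simp
    also have "\<dots> = g (Suc b)" using Suc \<open>a \<le> b\<close> by simp
    finally show ?thesis .
  qed
qed

lemma sb_chain:
  assumes "same_block D a b" "a \<le> b"
    and "\<And>i. a \<le> i \<Longrightarrow> i < b \<Longrightarrow> i \<notin> D \<Longrightarrow> g i = g (Suc i)"
  shows "g a = g b"
  using assms(2)
proof (rule chain_eq)
  fix i assume "a \<le> i" "i < b"
  then have "i \<notin> D" using assms(1,2) unfolding same_block_def by (auto simp: min_def max_def)
  then show "g i = g (Suc i)" using assms(3) \<open>a \<le> i\<close> \<open>i < b\<close> by blast
qed

lemma avoid_finite:
  fixes g :: "'i \<Rightarrow> 'a \<Rightarrow> real"
  assumes "finite I" and "p0 \<in> V"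
    and C: "\<And>p q s. p \<in> V \<Longrightarrow> q \<in> V \<Longrightarrow> C p q s \<in> V"
    and lin: "\<And>i p q s. i \<in> I \<Longrightarrow> p \<in> V \<Longrightarrow> q \<in> V \<Longrightarrow> g i (C p q s) = g i p + s * g i q"
    and nz: "\<And>i. i \<in> I \<Longrightarrow> \<exists>q\<in>V. g i q \<noteq> 0"
  shows "\<exists>p\<in>V. \<forall>i\<in>I. g i p \<noteq> 0"
  using assms(1) lin nz
proof (induction I rule: finite_induct)
  case empty then show ?case using assms(2) by blast
next
  case (insert i I)
  then obtain p where p: "p \<in> V" "\<forall>j\<in>I. g j p \<noteq> 0" by blast
  show ?case
  proof (cases "g i p = 0")
    case False then show ?thesis using p by blast
  next
    case True
    obtain q where q: "q \<in> V" "g i q \<noteq> 0" using insert.prems(2) by blast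
    have fin: "finite (insert 0 ((\<lambda>j. - g j p / g j q) ` I))" using insert.hyps(1) by simp
    obtain s :: real where s: "s \<notin> insert 0 ((\<lambda>j. - g j p / g j q) ` I)"
      using ex_new_if_finite[OF infinite_UNIV_char_0 fin] by blast
    have "C p q s \<in> V" using C p q by blast
    moreover have "\<forall>j\<in>insert i I. g j (C p q s) \<noteq> 0"
    proof
      fix j assume j: "j \<in> insert i I"
      have e: "g j (C p q s) = g j p + s * g j q" using insert.prems(1)[OF j p(1) q(1)] .
      show "g j (C p q s) \<noteq> 0"
      proof (cases "j = i")
        case True then show ?thesis using e \<open>g i p = 0\<close> q s by auto
      next
        case False
        then have jI: "j \<in> I" using j by auto
        show ?thesis
        proof
          assume "g j (C p q s) = 0"
          then have h: "g j p + s * g j q = 0" using e by simp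
          then have "g j q \<noteq> 0" using p(2) jI by auto
          then have "s = - g j p / g j q" using h by (simp add: field_simps)
          then show False using s jI by auto
        qed
      qed
    qed
    ultimately show ?thesis by blast
  qed
qed

lemma list_block:
  assumes "\<forall>(m, y) \<in> set L. 0 < m"
    and "a < sum_list (map fst L)" "b < sum_list (map fst L)"
    and "\<forall>c\<in>set (butlast (psums (map fst L))). \<not> (min a b < c \<and> c \<le> max a b)"
  shows "concat (map (\<lambda>(m, y). replicate m y) L) ! a = concat (map (\<lambda>(m, y). replicate m y) L) ! b"
  using assms
proof (induction L arbitrary: a b)
  case Nil then show ?case by simp
next
  case (Cons my L)
  obtain m y where my: "my = (m, y)" by (cases my)
  have m0: "0 < m" using Cons.prems(1) my by auto
  have cat: "concat (map (\<lambda>(m, y). replicate m y) (my # L)) = replicate m y @ concat (map (\<lambda>(m, y). replicate m y) L)"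
    using my by simp
  show ?case
  proof (cases "L = []")
    case True
    then show ?thesis using Cons.prems my by (simp add: nth_append)
  next
    case False
    have ne: "psums (map fst L) \<noteq> []" using False by (cases L) auto
    have bl: "butlast (psums (map fst (my # L))) = m # map ((+) m) (butlast (psums (map fst L)))"
      using my ne by (simp add: map_butlast)
    have cuts: "\<forall>c\<in>set (butlast (psums (map fst L))). \<not> (min a b < c + m \<and> c + m \<le> max a b)"
      using Cons.prems(4) unfolding bl by (auto simp: add.commute)
    have mcut: "\<not> (min a b < m \<and> m \<le> max a b)" using Cons.prems(4) unfolding bl by auto
    show ?thesis
    proof (cases "a < m")
      case True
      then have "b < m" using mcut by (auto simp: min_def max_def split: if_splits)
      then show ?thesis using True unfolding cat by (simp add: nth_append)
    next
      case False
      then have "\<not> b < m" using mcut by (auto simp: min_def max_def split: if_splits)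
      have IH: "concat (map (\<lambda>(m, y). replicate m y) L) ! (a - m) = concat (map (\<lambda>(m, y). replicate m y) L) ! (b - m)"
      proof (rule Cons.IH)
        show "\<forall>(m, y)\<in>set L. 0 < m" using Cons.prems(1) by auto
        show "a - m < sum_list (map fst L)" using Cons.prems(2) my False by auto
        show "b - m < sum_list (map fst L)" using Cons.prems(3) my \<open>\<not> b < m\<close> by auto
        show "\<forall>c\<in>set (butlast (psums (map fst L))). \<not> (min (a - m) (b - m) < c \<and> c \<le> max (a - m) (b - m))"
          using cuts False \<open>\<not> b < m\<close> by (auto simp: min_def max_def split: if_splits)
      qed
      then show ?thesis using False \<open>\<not> b < m\<close> unfolding cat by (simp add: nth_append)
    qed
  qed
qed

lemma list_pos:
  assumes "\<forall>(m, y) \<in> set L. 0 < y" "a < length (concat (map (\<lambda>(m, y). replicate m y) L))"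
  shows "0 < concat (map (\<lambda>(m, y). replicate m y) L) ! a"
proof -
  have "concat (map (\<lambda>(m, y). replicate m y) L) ! a \<in> set (concat (map (\<lambda>(m, y). replicate m y) L))"
    using assms(2) by (rule nth_mem)
  then show ?thesis using assms(1) by (auto split: prod.splits if_splits)
qed

lemma len_cat: "length (concat (map (\<lambda>(m, y). replicate m y) L)) = sum_list (map fst L)"
  by (induction L) auto

lemma rcoord_props:
  assumes pos: "\<forall>(r, d) \<in> set rd. 0 < r \<and> 0 < d"
    and a: "1 \<le> a" "a \<le> sum_list (compP rd)" and b: "1 \<le> b" "b \<le> sum_list (compP rd)"
  shows "same_block (cuts_of (compP rd)) a b \<Longrightarrow> rcoord rd a = rcoord rd b"
    and "0 < rcoord rd a"
proof -
  define L where "L = map (\<lambda>(r, d). (r * d, r)) rd"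
  have fstL: "map fst L = compP rd" unfolding L_def compP_def by (auto split: prod.splits)
  have catL: "concat (map (\<lambda>(r, d). replicate (r * d) r) rd) = concat (map (\<lambda>(m, y). replicate m y) L)"
    unfolding L_def by (induction rd) auto
  have rc: "rcoord rd j = concat (map (\<lambda>(m, y). replicate m y) L) ! (j - 1)" for j
    unfolding rcoord_def catL ..
  {
    assume sb: "same_block (cuts_of (compP rd)) a b"
    show "rcoord rd a = rcoord rd b" unfolding rc
    proof (rule list_block)
      show "\<forall>(m, y)\<in>set L. 0 < m" using pos unfolding L_def by auto
      show "a - 1 < sum_list (map fst L)" "b - 1 < sum_list (map fst L)" using a b fstL by auto
      show "\<forall>c\<in>set (butlast (psums (map fst L))). \<not> (min (a - 1) (b - 1) < c \<and> c \<le> max (a - 1) (b - 1))"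
        using sb a b unfolding fstL same_block_def cuts_of_def by (auto simp: min_def max_def split: if_splits)
    qed
  }
  have p2: "\<forall>(m, y)\<in>set L. 0 < y" using pos unfolding L_def by auto
  have "a - 1 < length (concat (map (\<lambda>(m, y). replicate m y) L))"
    using a len_cat[of L] fstL by auto
  then show "0 < rcoord rd a" unfolding rc using list_pos[OF p2] by blast
qed

lemma sb_side: "same_block D k l \<Longrightarrow> x \<in> D \<Longrightarrow> (k \<le> x \<longleftrightarrow> l \<le> x)"
  unfolding same_block_def by (auto simp: min_def max_def split: if_splits)

lemma rpair_alpha: "1 \<le> d \<Longrightarrow> d < n \<Longrightarrow> rpair n (alpha d) u = u d - u (Suc d)"
proof -
  assume d: "1 \<le> d" "d < n"
  have "rpair n (alpha d) u = (\<Sum>j = 1..n. (if j = d then u d else 0) - (if j = Suc d then u (Suc d) else 0))"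
    unfolding rpair_def alpha_def by (rule sum.cong) auto
  also have "\<dots> = u d - u (Suc d)" using d by (simp add: sum_subtractf)
  finally show ?thesis .
qed

definition lo :: "nat set \<Rightarrow> nat \<Rightarrow> nat" where "lo D c = Max (insert 0 {d\<in>D. d < c})"
definition hi :: "nat \<Rightarrow> nat set \<Rightarrow> nat \<Rightarrow> nat" where "hi n D c = Min (insert n {d\<in>D. c < d})"
definition cw :: "nat \<Rightarrow> nat set \<Rightarrow> nat \<Rightarrow> nat \<Rightarrow> real" where
  "cw n D c k = (if lo D c < k \<and> k \<le> c then real (hi n D c - c) / real (hi n D c - lo D c)
     else if c < k \<and> k \<le> hi n D c then - (real (c - lo D c) / real (hi n D c - lo D c)) else 0)"

lemma lo_props:
  assumes "finite D" "1 \<le> c"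
  shows "lo D c < c" "lo D c = 0 \<or> lo D c \<in> D" "\<And>d. d \<in> D \<Longrightarrow> d < c \<Longrightarrow> d \<le> lo D c"
proof -
  have f: "finite (insert 0 {d\<in>D. d < c})" using assms(1) by simp
  have "lo D c \<in> insert 0 {d\<in>D. d < c}" unfolding lo_def using Max_in[OF f] by blast
  then show "lo D c < c" "lo D c = 0 \<or> lo D c \<in> D" using assms(2) by auto
  show "\<And>d. d \<in> D \<Longrightarrow> d < c \<Longrightarrow> d \<le> lo D c" unfolding lo_def using f by (intro Max_ge) auto
qed

lemma hi_props:
  assumes "finite D" "c < n"
  shows "c < hi n D c" "hi n D c \<le> n" "hi n D c = n \<or> hi n D c \<in> D" "\<And>d. d \<in> D \<Longrightarrow> c < d \<Longrightarrow> hi n D c \<le> d"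
proof -
  have f: "finite (insert n {d\<in>D. c < d})" using assms(1) by simp
  have "hi n D c \<in> insert n {d\<in>D. c < d}" unfolding hi_def using Min_in[OF f] by blast
  then show "c < hi n D c" "hi n D c = n \<or> hi n D c \<in> D" using assms(2) by auto
  show "hi n D c \<le> n" unfolding hi_def using f by (intro Min_le) auto
  show "\<And>d. d \<in> D \<Longrightarrow> c < d \<Longrightarrow> hi n D c \<le> d" unfolding hi_def using f by (intro Min_le) auto
qed

lemma block_char:
  assumes D: "D \<subseteq> {1..<n}" and c: "1 \<le> c" "c < n" "c \<notin> D"
    and k: "1 \<le> k" "k \<le> n" and l: "1 \<le> l" "l \<le> n"
    and kin: "lo D c < k" "k \<le> hi n D c"
  shows "same_block D k l \<longleftrightarrow> lo D c < l \<and> l \<le> hi n D c"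
proof -
  have fD: "finite D" using D finite_subset by blast
  note L = lo_props[OF fD c(1)] and H = hi_props[OF fD c(2)]
  show ?thesis
  proof
    assume sb: "same_block D k l"
    have "lo D c < l"
    proof (cases "lo D c = 0")
      case True then show ?thesis using l by simp
    next
      case False then have "lo D c \<in> D" using L(2) by simp
      then show ?thesis using sb_side[OF sb] kin by fastforce
    qed
    moreover have "l \<le> hi n D c"
    proof (cases "hi n D c = n")
      case True then show ?thesis using l by simp
    next
      case False then have "hi n D c \<in> D" using H(3) by simp
      then show ?thesis using sb_side[OF sb] kin by fastforce
    qed
    ultimately show "lo D c < l \<and> l \<le> hi n D c" by simp
  next
    assume lin: "lo D c < l \<and> l \<le> hi n D c"
    show "same_block D k l" unfolding same_block_def
    proof (intro ballI notI)
      fix x assume x: "x \<in> D" "min k l \<le> x \<and> x < max k l"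
      then have "lo D c < x" "x < hi n D c" using kin lin by (auto simp: min_def max_def split: if_splits)
      show False
      proof (cases "x < c")
        case True then show False using L(3)[OF x(1)] \<open>lo D c < x\<close> by simp
      next
        case False
        then have "c < x" using c(3) x(1) by (cases "x = c") auto
        then show False using H(4)[OF x(1)] \<open>x < hi n D c\<close> by simp
      qed
    qed
  qed
qed

lemma cw_in_a:
  assumes DQ: "DQ \<subseteq> {1..<n}" and DR: "DR \<subseteq> DQ" and c: "c \<in> DQ" "c \<notin> DR"
  shows "in_a n DQ (cw n DR c)"
proof -
  have c1: "1 \<le> c" "c < n" using DQ c by auto
  have fD: "finite DR" using DQ DR finite_subset by (metis finite_atLeastLessThan)
  note L = lo_props[OF fD c1(1)] and H = hi_props[OF fD c1(2)]
  show ?thesis unfolding in_a_def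
  proof (intro conjI allI impI)
    fix k assume "k \<notin> {1..n}"
    then show "cw n DR c k = 0" unfolding cw_def using H(2) c1 by auto
  next
    fix k l assume k: "k \<in> {1..n}" and l: "l \<in> {1..n}" and sb: "same_block DQ k l"
    have e1: "lo DR c < k \<longleftrightarrow> lo DR c < l"
    proof (cases "lo DR c = 0")
      case True then show ?thesis using k l by simp
    next
      case False then have "lo DR c \<in> DQ" using L(2) DR by auto
      then show ?thesis using sb_side[OF sb] by fastforce
    qed
    have e2: "k \<le> hi n DR c \<longleftrightarrow> l \<le> hi n DR c"
    proof (cases "hi n DR c = n")
      case True then show ?thesis using k l by simp
    next
      case False then have "hi n DR c \<in> DQ" using H(3) DR by auto
      then show ?thesis using sb_side[OF sb] by fastforce
    qed
    have e3: "k \<le> c \<longleftrightarrow> l \<le> c" using sb_side[OF sb c(1)] .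
    show "cw n DR c k = cw n DR c l" unfolding cw_def using e1 e2 e3 by (simp add: not_le[symmetric])
  qed
qed

lemma cw_interval_sum:
  assumes fD: "finite DR" and c: "1 \<le> c" "c < n"
  shows "(\<Sum>l\<in>{Suc (lo DR c)..hi n DR c}. cw n DR c l) = 0"
proof -
  note L = lo_props[OF fD c(1)] and H = hi_props[OF fD c(2)]
  define s where "s = lo DR c"
  define e where "e = hi n DR c"
  have sc: "s < c" and ce: "c < e" using L H unfolding s_def e_def by auto
  have un: "{Suc s..e} = {Suc s..c} \<union> {Suc c..e}" using sc ce by auto
  have "(\<Sum>l\<in>{Suc s..e}. cw n DR c l) = (\<Sum>l\<in>{Suc s..c}. cw n DR c l) + (\<Sum>l\<in>{Suc c..e}. cw n DR c l)"
    unfolding un by (rule sum.union_disjoint) auto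
  also have "(\<Sum>l\<in>{Suc s..c}. cw n DR c l) = (\<Sum>l\<in>{Suc s..c}. real (e - c) / real (e - s))"
    by (rule sum.cong) (auto simp: cw_def s_def e_def)
  also have "(\<Sum>l\<in>{Suc c..e}. cw n DR c l) = (\<Sum>l\<in>{Suc c..e}. - (real (c - s) / real (e - s)))"
    by (rule sum.cong) (auto simp: cw_def s_def e_def)
  finally have "(\<Sum>l\<in>{Suc s..e}. cw n DR c l) = real (c - s) * (real (e - c) / real (e - s)) - real (e - c) * (real (c - s) / real (e - s))"
    using sc ce by simp
  then show ?thesis unfolding s_def e_def by simp
qed

lemma cw_block_sum:
  assumes DQ: "DQ \<subseteq> {1..<n}" and DR: "DR \<subseteq> DQ" and c: "c \<in> DQ" "c \<notin> DR" and k: "k \<in> {1..n}"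
  shows "(\<Sum>l\<in>{l\<in>{1..n}. same_block DR k l}. cw n DR c l) = 0"
proof -
  have c1: "1 \<le> c" "c < n" using DQ c by auto
  have DR': "DR \<subseteq> {1..<n}" using DQ DR by auto
  have fD: "finite DR" using DR' finite_subset by blast
  note L = lo_props[OF fD c1(1)] and H = hi_props[OF fD c1(2)]
  show ?thesis
  proof (cases "lo DR c < k \<and> k \<le> hi n DR c")
    case True
    have "{l\<in>{1..n}. same_block DR k l} = {Suc (lo DR c)..hi n DR c}"
    proof (rule Set.set_eqI)
      fix l
      show "l \<in> {l\<in>{1..n}. same_block DR k l} \<longleftrightarrow> l \<in> {Suc (lo DR c)..hi n DR c}"
      proof (cases "1 \<le> l \<and> l \<le> n")
        case True
        then show ?thesis using block_char[OF DR' c1 c(2), of k l] k \<open>lo DR c < k \<and> k \<le> hi n DR c\<close> by auto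
      next
        case False
        then show ?thesis using H(2) by auto
      qed
    qed
    then show ?thesis using cw_interval_sum[OF fD c1] by simp
  next
    case False
    have "cw n DR c l = 0" if l: "l \<in> {l\<in>{1..n}. same_block DR k l}" for l
    proof -
      have "\<not> (lo DR c < l \<and> l \<le> hi n DR c)"
      proof
        assume lin: "lo DR c < l \<and> l \<le> hi n DR c"
        have "same_block DR l k" using l sb_sym' by auto
        then have "lo DR c < k \<and> k \<le> hi n DR c" using block_char[OF DR' c1 c(2), of l k] l k lin by auto
        then show False using False by simp
      qed
      then show ?thesis unfolding cw_def using H(1) by auto
    qed
    then show ?thesis by simp
  qed
qed

lemma cw_sum:
  assumes fD: "finite DR" and c: "1 \<le> c" "c < n"
  shows "(\<Sum>l=1..n. cw n DR c l) = 0"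
proof -
  note L = lo_props[OF fD c(1)] and H = hi_props[OF fD c(2)]
  have "(\<Sum>l=1..n. cw n DR c l) = (\<Sum>l\<in>{Suc (lo DR c)..hi n DR c}. cw n DR c l)"
  proof (rule sum.mono_neutral_right)
    show "{Suc (lo DR c)..hi n DR c} \<subseteq> {1..n}" using H(2) by auto
    show "\<forall>i\<in>{1..n} - {Suc (lo DR c)..hi n DR c}. cw n DR c i = 0" unfolding cw_def using H(1) by auto
  qed simp
  then show ?thesis using cw_interval_sum[OF fD c] by simp
qed

lemma cw_sign:
  assumes fD: "finite DR" and c: "1 \<le> c" "c < n"
  shows "k \<le> c \<Longrightarrow> 0 \<le> cw n DR c k" "c < k \<Longrightarrow> cw n DR c k \<le> 0" "0 < cw n DR c c"
proof -
  note L = lo_props[OF fD c(1)] and H = hi_props[OF fD c(2)]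
  show "k \<le> c \<Longrightarrow> 0 \<le> cw n DR c k" unfolding cw_def by auto
  show "c < k \<Longrightarrow> cw n DR c k \<le> 0" unfolding cw_def by auto
  show "0 < cw n DR c c" unfolding cw_def using L(1) H(1) by auto
qed

lemma cw_pair:
  assumes DQ: "DQ \<subseteq> {1..<n}" and DR: "DR \<subseteq> DQ" and c: "c \<in> DQ" "c \<notin> DR"
    and d: "d \<in> DQ" "d \<notin> DR"
  shows "rpair n (alpha d) (cw n DR c) = (if d = c then 1 else 0)"
proof -
  have c1: "1 \<le> c" "c < n" using DQ c by auto
  have d1: "1 \<le> d" "d < n" using DQ d by auto
  have fD: "finite DR" using DQ DR finite_subset by (metis finite_atLeastLessThan)
  note L = lo_props[OF fD c1(1)] and H = hi_props[OF fD c1(2)]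
  have r: "rpair n (alpha d) (cw n DR c) = cw n DR c d - cw n DR c (Suc d)" using rpair_alpha d1 by blast
  show ?thesis
  proof (cases "d = c")
    case True
    have "cw n DR c d - cw n DR c (Suc d) = real (hi n DR c - c) / real (hi n DR c - lo DR c) + real (c - lo DR c) / real (hi n DR c - lo DR c)"
      using True L(1) H(1) unfolding cw_def by auto
    also have "\<dots> = (real (hi n DR c - c) + real (c - lo DR c)) / real (hi n DR c - lo DR c)"
      by (simp add: add_divide_distrib)
    also have "real (hi n DR c - c) + real (c - lo DR c) = real (hi n DR c - lo DR c)"
      using L(1) H(1) by (simp add: of_nat_diff)
    also have "\<dots> / real (hi n DR c - lo DR c) = 1" using L(1) H(1) by simp
    finally show ?thesis using r True by simp
  next
    case False
    have ds: "d \<noteq> lo DR c" using L(2) d d1 by auto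
    have de: "d \<noteq> hi n DR c" using H(3) d d1 by auto
    have "cw n DR c d = cw n DR c (Suc d)"
      unfolding cw_def using ds de False by (auto simp: less_Suc_eq_le le_eq_less_or_eq)
    then show ?thesis using r False by simp
  qed
qed

lemma zero_sol:
  assumes DQ: "DQ \<subseteq> {1..<n}" and DR: "DR \<subseteq> DQ" and u: "in_aQR n DQ DR u"
    and hd: "\<forall>d\<in>DQ - DR. u d = u (Suc d)"
  shows "u k = 0"
proof -
  have ia: "in_a n DQ u" using u unfolding in_aQR_def by simp
  have step: "u i = u (Suc i)" if "1 \<le> i" "i < n" "i \<notin> DR" for i
  proof (cases "i \<in> DQ")
    case True then show ?thesis using hd that by auto
  next
    case False
    then have "same_block DQ i (Suc i)" using sb_step by blast
    then show ?thesis using ia that unfolding in_a_def by auto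
  qed
  have blk0: "u k = u l" if k: "k \<in> {1..n}" and l: "l \<in> {1..n}" and sb: "same_block DR k l" and kl: "k \<le> l" for k l
  proof (rule sb_chain[OF sb kl])
    fix i assume i: "k \<le> i" "i < l" "i \<notin> DR"
    have "1 \<le> i" "i < n" using i k l by auto
    then show "u i = u (Suc i)" using step i(3) by blast
  qed
  have blk: "u l = u k" if k: "k \<in> {1..n}" and l: "l \<in> {1..n}" and sb: "same_block DR k l" for k l
  proof (cases "k \<le> l")
    case True
    then show ?thesis using blk0[OF k l sb] by simp
  next
    case False
    have sb': "same_block DR l k" using sb_sym'[OF sb] .
    show ?thesis using blk0[OF l k sb'] False by simp
  qed
  show ?thesis
  proof (cases "k \<in> {1..n}")
    case False then show ?thesis using ia unfolding in_a_def by auto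
  next
    case True
    define X where "X = {l\<in>{1..n}. same_block DR k l}"
    have A: "(\<Sum>l\<in>X. u l) = 0" using u True unfolding in_aQR_def X_def by auto
    have B: "(\<Sum>l\<in>X. u l) = (\<Sum>l\<in>X. u k)"
      by (rule sum.cong) (use blk[OF True] in \<open>auto simp: X_def\<close>)
    have C: "card X \<noteq> 0"
    proof -
      have "k \<in> X" using True by (simp add: X_def)
      moreover have "finite X" by (simp add: X_def)
      ultimately show ?thesis using card_0_eq by blast
    qed
    have "real (card X) * u k = 0" using A B by simp
    then show ?thesis using C by simp
  qed
qed

lemma cw_aQR:
  assumes DQ: "DQ \<subseteq> {1..<n}" and DR: "DR \<subseteq> DQ" and c: "c \<in> DQ" "c \<notin> DR"
  shows "in_aQR n DQ DR (cw n DR c)"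
  unfolding in_aQR_def using cw_in_a[OF assms] cw_block_sum[OF assms] by blast

lemma coweight_eq:
  assumes DQ: "DQ \<subseteq> {1..<n}" and DR: "DR \<subseteq> DQ" and c: "c \<in> DQ" "c \<notin> DR"
  shows "coweight n DQ DR c = cw n DR c"
  unfolding coweight_def
proof (rule the_equality)
  show "in_aQR n DQ DR (cw n DR c) \<and> (\<forall>d\<in>DQ - DR. rpair n (alpha d) (cw n DR c) = (if d = c then 1 else 0))"
    using cw_aQR[OF assms] cw_pair[OF assms] by blast
next
  fix v assume v: "in_aQR n DQ DR v \<and> (\<forall>d\<in>DQ - DR. rpair n (alpha d) v = (if d = c then 1 else 0))"
  define u where "u = (\<lambda>k. v k - cw n DR c k)"
  have cwa: "in_aQR n DQ DR (cw n DR c)" using cw_aQR[OF assms] .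
  have va: "in_a n DQ v" and vs: "\<forall>k\<in>{1..n}. (\<Sum>l\<in>{l\<in>{1..n}. same_block DR k l}. v l) = 0"
    using v unfolding in_aQR_def by blast+
  have ca: "in_a n DQ (cw n DR c)" and cs: "\<forall>k\<in>{1..n}. (\<Sum>l\<in>{l\<in>{1..n}. same_block DR k l}. cw n DR c l) = 0"
    using cwa unfolding in_aQR_def by blast+
  have ua1: "in_a n DQ u" unfolding in_a_def
  proof (intro conjI allI impI)
    fix k assume k: "k \<notin> {1..n}"
    have "v k = 0" "cw n DR c k = 0" using va ca k unfolding in_a_def by blast+
    then show "u k = 0" unfolding u_def by simp
  next
    fix k l assume k: "k \<in> {1..n}" and l: "l \<in> {1..n}" and sb: "same_block DQ k l"
    have "v k = v l" "cw n DR c k = cw n DR c l" using va ca k l sb unfolding in_a_def by blast+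
    then show "u k = u l" unfolding u_def by simp
  qed
  have ua2: "\<forall>k\<in>{1..n}. (\<Sum>l\<in>{l\<in>{1..n}. same_block DR k l}. u l) = 0"
  proof
    fix k assume k: "k \<in> {1..n}"
    have "(\<Sum>l\<in>{l\<in>{1..n}. same_block DR k l}. u l) = (\<Sum>l\<in>{l\<in>{1..n}. same_block DR k l}. v l) - (\<Sum>l\<in>{l\<in>{1..n}. same_block DR k l}. cw n DR c l)"
      unfolding u_def by (rule sum_subtractf)
    then show "(\<Sum>l\<in>{l\<in>{1..n}. same_block DR k l}. u l) = 0" using vs cs k by simp
  qed
  have ua: "in_aQR n DQ DR u" unfolding in_aQR_def using ua1 ua2 by blast
  have "\<forall>d\<in>DQ - DR. u d = u (Suc d)"
  proof
    fix d assume d: "d \<in> DQ - DR"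
    then have d1: "1 \<le> d" "d < n" using DQ by auto
    have "rpair n (alpha d) v = rpair n (alpha d) (cw n DR c)"
      using v cw_pair[OF assms, of d] d by auto
    then show "u d = u (Suc d)" unfolding u_def using rpair_alpha[OF d1] by simp
  qed
  then have "u k = 0" for k using zero_sol[OF DQ DR ua] by blast
  then show "v = cw n DR c" unfolding u_def by (auto simp: fun_eq_iff)
qed

abbreviation blk :: "nat \<Rightarrow> nat set \<Rightarrow> nat \<Rightarrow> nat set" where
  "blk n D k \<equiv> {l\<in>{1..n}. same_block D k l}"

lemma blk_eq: "same_block D k l \<Longrightarrow> blk n D k = blk n D l"
proof (rule Set.set_eqI)
  fix x assume sb: "same_block D k l"
  have "same_block D k x \<longleftrightarrow> same_block D l x"
  proof
    assume "same_block D k x" then show "same_block D l x" using sb_trans[OF sb_sym'[OF sb]] by blast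
  next
    assume "same_block D l x" then show "same_block D k x" using sb_trans[OF sb] by blast
  qed
  then show "x \<in> blk n D k \<longleftrightarrow> x \<in> blk n D l" by simp
qed

lemma blk_card: "k \<in> {1..n} \<Longrightarrow> card (blk n D k) \<noteq> 0"
proof -
  assume "k \<in> {1..n}"
  then have "k \<in> blk n D k" by simp
  moreover have "finite (blk n D k)" by simp
  ultimately show ?thesis using card_0_eq by blast
qed

definition good :: "nat \<Rightarrow> nat set \<Rightarrow> nat \<Rightarrow> (nat \<Rightarrow> real) \<Rightarrow> bool" where
  "good n DQ c u = (in_a n DQ u \<and> (\<Sum>j=1..n. u j) = 0 \<and> (\<forall>j\<in>{1..n}. j \<le> c \<longrightarrow> 0 \<le> u j)
     \<and> (\<forall>j\<in>{1..n}. c < j \<longrightarrow> u j \<le> 0) \<and> (\<exists>j\<in>{1..n}. 0 < u j))"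

lemma good_cw:
  assumes DQ: "DQ \<subseteq> {1..<n}" and DR: "DR \<subseteq> DQ" and c: "c \<in> DQ" "c \<notin> DR"
  shows "good n DQ c (coweight n DQ DR c)"
proof -
  have c1: "1 \<le> c" "c < n" using DQ c by auto
  have fD: "finite DR" using DQ DR finite_subset by (metis finite_atLeastLessThan)
  show ?thesis unfolding good_def coweight_eq[OF assms]
    using cw_in_a[OF assms] cw_sum[OF fD c1] cw_sign[OF fD c1] c1 by force
qed

lemma sum_blk_weight:
  assumes w: "in_a n D \<omega>" and x: "x \<in> {1..n}"
  shows "(\<Sum>k=1..n. \<omega> k * ((if same_block D k x then 1 else 0) / real (card (blk n D k)))) = \<omega> x"
proof -
  have "(\<Sum>k=1..n. \<omega> k * ((if same_block D k x then 1 else 0) / real (card (blk n D k))))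
      = (\<Sum>k\<in>blk n D x. \<omega> x / real (card (blk n D x)))"
  proof -
    have "(\<Sum>k=1..n. \<omega> k * ((if same_block D k x then 1 else 0) / real (card (blk n D k))))
        = (\<Sum>k=1..n. if same_block D x k then \<omega> x / real (card (blk n D x)) else 0)"
    proof (rule sum.cong)
      fix k assume k: "k \<in> {1..n}"
      show "\<omega> k * ((if same_block D k x then 1 else 0) / real (card (blk n D k))) =
            (if same_block D x k then \<omega> x / real (card (blk n D x)) else 0)"
      proof (cases "same_block D k x")
        case True
        then have "\<omega> k = \<omega> x" using w k x unfolding in_a_def by blast
        moreover have "blk n D k = blk n D x" using blk_eq[OF True] .
        moreover have "same_block D x k" using sb_sym'[OF True] .
        ultimately show ?thesis using True by simp
      next
        case False
        then have "\<not> same_block D x k" using sb_sym' by blast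
        then show ?thesis using False by simp
      qed
    qed simp
    also have "\<dots> = (\<Sum>k\<in>blk n D x. \<omega> x / real (card (blk n D x)))"
      by (simp add: sum.inter_filter[symmetric])
    finally show ?thesis .
  qed
  also have "\<dots> = \<omega> x" using blk_card[OF x, of D] by simp
  finally show ?thesis .
qed

lemma proj_alpha:
  assumes c: "1 \<le> c" "c < n" and k: "k \<in> {1..n}"
  shows "proj n D (alpha c) k = ((if same_block D k c then 1 else 0) - (if same_block D k (Suc c) then 1 else 0)) / real (card (blk n D k))"
proof -
  have "(\<Sum>l\<in>blk n D k. alpha c l) = (\<Sum>l\<in>blk n D k. (if l = c then 1 else 0) - (if l = Suc c then 1 else 0))"
    unfolding alpha_def by (rule sum.cong) auto
  also have "\<dots> = (if same_block D k c then 1 else 0) - (if same_block D k (Suc c) then 1 else 0)"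
    using c by (simp add: sum_subtractf)
  finally show ?thesis unfolding proj_def using k by simp
qed

lemma sum_blk_one:
  assumes x: "x \<in> {1..n}"
  shows "(\<Sum>k=1..n. (if same_block D k x then 1 else 0) / real (card (blk n D k))) = 1"
proof -
  have ia: "in_a n D (\<lambda>k. if k \<in> {1..n} then 1 else 0)" unfolding in_a_def by auto
  have "(\<Sum>k=1..n. (if same_block D k x then 1 else 0) / real (card (blk n D k)))
      = (\<Sum>k=1..n. (if k \<in> {1..n} then 1 else 0) * ((if same_block D k x then 1 else 0) / real (card (blk n D k))))"
    by (rule sum.cong) auto
  also have "\<dots> = 1" using sum_blk_weight[OF ia x] x by simp
  finally show ?thesis .
qed

lemma coroot_val:
  assumes c: "1 \<le> c" "c < n"
  shows "coroot n DR c k = (if k \<in> {1..n} then (if same_block DR k c then 1 else 0) / real (card (blk n DR k))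
                           - (if same_block DR k (Suc c) then 1 else 0) / real (card (blk n DR k)) else 0)"
  unfolding coroot_def using proj_alpha[OF c, of k DR] by (auto simp: proj_def diff_divide_distrib)

lemma good_coroot:
  assumes DQ: "DQ \<subseteq> {1..<n}" and DR: "DR \<subseteq> DQ" and c: "c \<in> DR"
  shows "good n DQ c (coroot n DR c)"
proof -
  have c1: "1 \<le> c" "c < n" using DQ DR c by auto
  have cn: "c \<in> {1..n}" "Suc c \<in> {1..n}" using c1 by auto
  note cv = coroot_val[OF c1, of DR]
  have ia: "in_a n DQ (coroot n DR c)" unfolding in_a_def
  proof (intro conjI allI impI)
    fix k assume k: "k \<notin> {1..n}" then show "coroot n DR c k = 0" by (simp only: cv[of k] if_not_P[OF k] if_False)
  next
    fix k l assume k: "k \<in> {1..n}" and l: "l \<in> {1..n}" and sb: "same_block DQ k l"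
    have sbR: "same_block DR k l" using sb_mono[OF DR sb] .
    have "blk n DR k = blk n DR l" using blk_eq[OF sbR] .
    moreover have "same_block DR k c \<longleftrightarrow> same_block DR l c" for c
      using sb_trans[OF sbR] sb_trans[OF sb_sym'[OF sbR]] by blast
    ultimately show "coroot n DR c k = coroot n DR c l" using cv k l by simp
  qed
  have sum0: "(\<Sum>j=1..n. coroot n DR c j) = 0"
  proof -
    have "(\<Sum>j=1..n. coroot n DR c j) = (\<Sum>j=1..n. (if same_block DR j c then 1 else 0) / real (card (blk n DR j)))
        - (\<Sum>j=1..n. (if same_block DR j (Suc c) then 1 else 0) / real (card (blk n DR j)))"
      unfolding sum_subtractf[symmetric] by (rule sum.cong) (auto simp: cv)
    then show ?thesis using sum_blk_one[OF cn(1)] sum_blk_one[OF cn(2)] by simp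
  qed
  have nsb: "\<not> same_block DR k (Suc c)" if "k \<le> c" for k
    using c that unfolding same_block_def by (auto simp: min_def max_def)
  have nsb2: "\<not> same_block DR k c" if "c < k" for k
    using c that unfolding same_block_def by (auto simp: min_def max_def)
  have s1: "\<forall>j\<in>{1..n}. j \<le> c \<longrightarrow> 0 \<le> coroot n DR c j" using cv nsb by auto
  have s2: "\<forall>j\<in>{1..n}. c < j \<longrightarrow> coroot n DR c j \<le> 0" using cv nsb2 by auto
  have cc: "card (blk n DR c) \<noteq> 0" by (rule blk_card[OF cn(1)])
  have nc: "\<not> same_block DR c (Suc c)" using nsb[of c] by simp
  have "coroot n DR c c = 1 / real (card (blk n DR c)) - 0 / real (card (blk n DR c))"
    by (simp only: cv[of c] if_P[OF cn(1)] if_P[OF sb_refl] if_not_P[OF nc])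
  moreover have "0 < real (card (blk n DR c))" using cc by (metis of_nat_0_less_iff gr_zeroI)
  ultimately have "0 < coroot n DR c c" by (metis diff_zero div_0 zero_less_divide_1_iff)
  then show ?thesis unfolding good_def using ia sum0 s1 s2 cn by blast
qed

lemma coroot_dual:
  assumes DR: "DR \<subseteq> {1..<n}" and c: "c \<in> DR" and d: "d \<in> DR"
  shows "rpair n (coweight n DR {} d) (coroot n DR c) = (if c = d then 1 else 0)"
proof -
  have c1: "1 \<le> c" "c < n" using DR c by auto
  have cn: "c \<in> {1..n}" "Suc c \<in> {1..n}" using c1 by auto
  have e: "coweight n DR {} d = cw n {} d" using coweight_eq[OF DR _ d] by simp
  have ia: "in_a n DR (cw n {} d)" using cw_in_a[OF DR _ d] by simp
  note cv = coroot_val[OF c1, of DR]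
  have "rpair n (cw n {} d) (coroot n DR c) =
      (\<Sum>k=1..n. cw n {} d k * ((if same_block DR k c then 1 else 0) / real (card (blk n DR k))))
    - (\<Sum>k=1..n. cw n {} d k * ((if same_block DR k (Suc c) then 1 else 0) / real (card (blk n DR k))))"
    unfolding rpair_def sum_subtractf[symmetric] by (rule sum.cong) (auto simp: cv right_diff_distrib)
  also have "\<dots> = cw n {} d c - cw n {} d (Suc c)"
    using sum_blk_weight[OF ia cn(1)] sum_blk_weight[OF ia cn(2)] by simp
  also have "\<dots> = rpair n (alpha c) (cw n {} d)" using rpair_alpha c1 by simp
  also have "\<dots> = (if c = d then 1 else 0)" using cw_pair[OF DR _ d _ c] by simp
  finally show ?thesis using e by simp
qed


lemma gram_det_mat:
  fixes f :: "nat \<Rightarrow> nat \<Rightarrow> real" and n N :: nat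
  assumes S: "S \<subseteq> {..<N}"
  defines "A \<equiv> Matrix.mat N N (\<lambda>(i, j). if i \<in> S \<and> j \<in> S then rpair n (f i) (f j) else if i = j then 1 else 0)"
  shows "det A = gram_det n S f"
proof -
  define E where "E = (\<lambda>i j. if i \<in> S \<and> j \<in> S then rpair n (f i) (f j) else if i = j then (1::real) else 0)"
  have A': "A = Matrix.mat N N (\<lambda>(i, j). E i j)" unfolding A_def E_def by simp
  have Ac: "A \<in> carrier_mat N N" unfolding A' by simp
  have h: "signof p * (\<Prod>i = 0..<N. A $$ (i, p i)) =
      (if p permutes S then real_of_int (sign p) * (\<Prod>i\<in>S. rpair n (f i) (f (p i))) else 0)"
    if p: "p permutes {0..<N}" for p
  proof -
    have pin: "p i < N" if "i < N" for i using permutes_in_image[OF p] that by auto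
    have "(\<Prod>i = 0..<N. A $$ (i, p i)) = (\<Prod>i = 0..<N. E i (p i))"
      by (rule prod.cong) (auto simp: A' pin)
    also have "\<dots> = (if p permutes S then (\<Prod>i\<in>S. rpair n (f i) (f (p i))) else 0)"
    proof (cases "p permutes S")
      case True
      have "(\<Prod>i = 0..<N. E i (p i)) = (\<Prod>i\<in>S. E i (p i))"
      proof (rule prod.mono_neutral_right)
        show "S \<subseteq> {0..<N}" using S by auto
        show "\<forall>i\<in>{0..<N} - S. E i (p i) = 1" using True unfolding E_def by (auto simp: permutes_not_in)
      qed simp
      also have "\<dots> = (\<Prod>i\<in>S. rpair n (f i) (f (p i)))"
        by (rule prod.cong) (use True permutes_in_image[OF True] in \<open>auto simp: E_def\<close>)
      finally show ?thesis using True by simp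
    next
      case False
      have "\<exists>i. i \<notin> S \<and> p i \<noteq> i"
      proof (rule ccontr)
        assume "\<not> (\<exists>i. i \<notin> S \<and> p i \<noteq> i)"
        then have "\<forall>x. x \<notin> S \<longrightarrow> p x = x" by blast
        moreover have "\<forall>y. \<exists>!x. p x = y" using p unfolding permutes_def by blast
        ultimately have "p permutes S" unfolding permutes_def by blast
        then show False using False by simp
      qed
      then obtain i where i: "i \<notin> S" "p i \<noteq> i" by blast
      have "i < N" using i(2) p unfolding permutes_def by (metis atLeastLessThan_iff le0)
      moreover have "E i (p i) = 0" using i unfolding E_def by auto
      ultimately have "(\<Prod>i = 0..<N. E i (p i)) = 0" by (intro prod_zero) auto
      then show ?thesis using False by simp
    qed
    finally show ?thesis by simp
  qed
  have "det A = (\<Sum>p\<in>{p. p permutes {0..<N}}. signof p * (\<Prod>i = 0..<N. A $$ (i, p i)))"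
    by (rule det_def'[OF Ac])
  also have "\<dots> = (\<Sum>p\<in>{p. p permutes {0..<N}}. if p \<in> {p. p permutes S} then real_of_int (sign p) * (\<Prod>i\<in>S. rpair n (f i) (f (p i))) else 0)"
    by (rule sum.cong) (auto simp: h)
  also have "\<dots> = (\<Sum>p\<in>{p. p permutes {0..<N}} \<inter> {p. p permutes S}. real_of_int (sign p) * (\<Prod>i\<in>S. rpair n (f i) (f (p i))))"
    by (rule sum.inter_restrict[symmetric]) (simp add: finite_permutations)
  also have "{p. p permutes {0..<N}} \<inter> {p. p permutes S} = {p. p permutes S}"
  proof -
    have "S \<subseteq> {0..<N}" using S by auto
    then show ?thesis using permutes_subset[of _ S "{0..<N}"] by auto
  qed
  finally show ?thesis unfolding gram_det_def by simp
qed

lemma quad_expand: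
  fixes x :: "nat \<Rightarrow> real" and f :: "nat \<Rightarrow> nat \<Rightarrow> real"
  shows "(\<Sum>k\<in>K. (\<Sum>i\<in>S. x i * f i k)^2) = (\<Sum>i\<in>S. x i * (\<Sum>j\<in>S. (\<Sum>k\<in>K. f i k * f j k) * x j))"
proof -
  have "(\<Sum>k\<in>K. (\<Sum>i\<in>S. x i * f i k)^2) = (\<Sum>k\<in>K. \<Sum>i\<in>S. \<Sum>j\<in>S. x i * (f i k * f j k * x j))"
    by (simp add: power2_eq_square sum_product mult_ac)
  also have "\<dots> = (\<Sum>i\<in>S. \<Sum>k\<in>K. \<Sum>j\<in>S. x i * (f i k * f j k * x j))"
    by (rule sum.swap)
  also have "\<dots> = (\<Sum>i\<in>S. \<Sum>j\<in>S. \<Sum>k\<in>K. x i * (f i k * f j k * x j))"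
    by (rule sum.cong[OF refl], rule sum.swap)
  also have "\<dots> = (\<Sum>i\<in>S. x i * (\<Sum>j\<in>S. (\<Sum>k\<in>K. f i k * f j k) * x j))"
    by (simp add: sum_distrib_left sum_distrib_right)
  finally show ?thesis .
qed

lemma gram_nz:
  fixes f g :: "nat \<Rightarrow> nat \<Rightarrow> real" and n N :: nat
  assumes S: "S \<subseteq> {..<N}"
    and dual: "\<And>c d. c \<in> S \<Longrightarrow> d \<in> S \<Longrightarrow> rpair n (g d) (f c) = (if c = d then 1 else 0)"
  shows "gram_det n S f \<noteq> 0"
proof
  assume g0: "gram_det n S f = 0"
  define A where "A = Matrix.mat N N (\<lambda>(i, j). if i \<in> S \<and> j \<in> S then rpair n (f i) (f j) else if i = j then (1::real) else 0)"
  have Ac: "A \<in> carrier_mat N N" unfolding A_def by simp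
  have "det A = 0" using gram_det_mat[OF S, of n f] g0 unfolding A_def by simp
  then obtain v where v: "v \<in> carrier_vec N" "v \<noteq> 0\<^sub>v N" "A *\<^sub>v v = 0\<^sub>v N"
    using det_0_iff_vec_prod_zero_field[OF Ac] by blast
  define x where "x i = v $ i" for i
  have dv: "dim_vec v = N" using v(1) by simp
  have rowi: "(\<Sum>j\<in>{0..<N}. A $$ (i, j) * x j) = 0" if i: "i < N" for i
  proof -
    have "(A *\<^sub>v v) $ i = 0" using v(3) i by simp
    moreover have "(A *\<^sub>v v) $ i = (\<Sum>j\<in>{0..<N}. A $$ (i, j) * x j)"
    proof -
      have dA: "dim_row A = N" "dim_col A = N" using Ac by auto
      have "(A *\<^sub>v v) $ i = Matrix.row A i \<bullet> v" using i dA by simp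
      also have "\<dots> = (\<Sum>j\<in>{0..<N}. Matrix.row A i $ j * v $ j)" unfolding Matrix.scalar_prod_def dv ..
      also have "\<dots> = (\<Sum>j\<in>{0..<N}. A $$ (i, j) * x j)"
        by (rule sum.cong) (use i dA in \<open>auto simp: x_def\<close>)
      finally show ?thesis .
    qed
    ultimately show ?thesis by simp
  qed
  have out: "x i = 0" if i: "i < N" "i \<notin> S" for i
  proof -
    have "(\<Sum>j\<in>{0..<N}. A $$ (i, j) * x j) = (\<Sum>j\<in>{0..<N}. if j = i then x i else 0)"
      by (rule sum.cong) (use i in \<open>auto simp: A_def\<close>)
    then show ?thesis using rowi[OF i(1)] i(1) by simp
  qed
  have inS: "(\<Sum>j\<in>S. rpair n (f i) (f j) * x j) = 0" if i: "i \<in> S" for i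
  proof -
    have iN: "i < N" using i S by auto
    have "(\<Sum>j\<in>{0..<N}. A $$ (i, j) * x j) = (\<Sum>j\<in>{0..<N}. if j \<in> S then rpair n (f i) (f j) * x j else 0)"
      by (rule sum.cong) (use i iN in \<open>auto simp: A_def\<close>)
    also have "\<dots> = (\<Sum>j\<in>{0..<N} \<inter> S. rpair n (f i) (f j) * x j)"
      by (rule sum.inter_restrict[symmetric]) simp
    also have "{0..<N} \<inter> S = S" using S by auto
    finally show ?thesis using rowi[OF iN] by simp
  qed
  define y where "y k = (\<Sum>i\<in>S. x i * f i k)" for k
  have "(\<Sum>k\<in>{1..n}. (y k)^2) = (\<Sum>i\<in>S. x i * (\<Sum>j\<in>S. rpair n (f i) (f j) * x j))"
    unfolding y_def rpair_def by (rule quad_expand)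
  also have "\<dots> = 0" using inS by simp
  finally have "(\<Sum>k\<in>{1..n}. (y k)^2) = 0" .
  then have y0: "y k = 0" if "k \<in> {1..n}" for k
    using sum_nonneg_eq_0_iff[of "{1..n}" "\<lambda>k. (y k)^2"] that by simp
  have xd: "x d = 0" if d: "d \<in> S" for d
  proof -
    have fS: "finite S" using S finite_subset by blast
    have "(\<Sum>i\<in>S. x i * (if i = d then 1 else 0)) = (\<Sum>i\<in>S. if i = d then x i else 0)"
      by (rule sum.cong) auto
    also have "\<dots> = x d" using d fS by (simp only: sum.delta if_True)
    finally have "x d = (\<Sum>i\<in>S. x i * (if i = d then 1 else 0))" by simp
    also have "\<dots> = (\<Sum>i\<in>S. x i * rpair n (g d) (f i))" using dual d by simp
    also have "\<dots> = (\<Sum>k\<in>{1..n}. g d k * y k)"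
      unfolding rpair_def y_def by (simp add: sum_distrib_left sum_distrib_right mult_ac sum.swap[of _ S])
    also have "\<dots> = 0" using y0 by simp
    finally show ?thesis .
  qed
  have "v = 0\<^sub>v N"
  proof (rule eq_vecI)
    fix i assume "i < dim_vec (0\<^sub>v N :: real vec)"
    then have i: "i < N" by simp
    have "x i = 0" using out[OF i] xd by (cases "i \<in> S") auto
    then show "v $ i = 0\<^sub>v N $ i" using i unfolding x_def by simp
  next
    show "dim_vec v = dim_vec (0\<^sub>v N :: real vec)" using dv by simp
  qed
  then show False using v(2) by simp
qed

lemma card_sum_if: "finite I \<Longrightarrow> real (card {b\<in>I. P b}) * z = (\<Sum>b\<in>I. if P b then z else 0)"
  by (simp add: sum.inter_filter[symmetric])

lemma neg_part:
  fixes n :: nat and DP DQ :: "nat set" and w :: "nat \<Rightarrow> nat" and rc :: "nat \<Rightarrow> nat" and u :: "nat \<Rightarrow> real" and c :: nat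
  assumes wp: "w permutes {1..n}"
    and mono: "\<And>i j. 1 \<le> i \<Longrightarrow> i < j \<Longrightarrow> j \<le> n \<Longrightarrow> same_block DP i j \<Longrightarrow> w i < w j"
    and rcpos: "\<And>a. a \<in> {1..n} \<Longrightarrow> 0 < rc a"
    and rcbl: "\<And>a b. a \<in> {1..n} \<Longrightarrow> b \<in> {1..n} \<Longrightarrow> same_block DP a b \<Longrightarrow> rc a = rc b"
    and gd: "good n DQ c u"
    and S0: "\<And>t. t \<in> {1..n} \<Longrightarrow> (\<Sum>a\<in>{1..n}. if same_block DP a t then u (w a) else 0) = 0"
  shows "(\<Sum>k\<in>{1..n}. nu n rc DP (Pw_cuts n DP DQ w) k * u (w k)) < 0"
proof -
  define I where "I = {1..n::nat}"
  define f where "f a = u (w a)" for a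
  define cc where "cc a = 1 / real (rc a)" for a
  define DS where "DS = Pw_cuts n DP DQ w"
  define PF where "PF t' t = (\<Sum>a\<in>I. if a < t' \<and> same_block DP a t then f a else 0)" for t' t
  have fI: "finite I" unfolding I_def by simp
  have winI: "w a \<in> I" if "a \<in> I" for a using permutes_in_image[OF wp] that unfolding I_def by simp
  have ua: "in_a n DQ u" and usum: "(\<Sum>j=1..n. u j) = 0" and uneg: "\<forall>j\<in>{1..n}. c < j \<longrightarrow> u j \<le> 0"
    and upos: "\<forall>j\<in>{1..n}. j \<le> c \<longrightarrow> 0 \<le> u j" and uex: "\<exists>j\<in>{1..n}. 0 < u j"
    using gd unfolding good_def by blast+
  have ccbl: "cc a = cc b" if "a \<in> I" "b \<in> I" "same_block DP a b" for a b
  proof -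
    have "rc a = rc b" using rcbl that unfolding I_def by blast
    then show ?thesis unfolding cc_def by simp
  qed
  have ccpos: "0 < cc a" if "a \<in> I" for a using rcpos that unfolding cc_def I_def by simp
  have pw_eq: "f a = f b" if a: "a \<in> I" and b: "b \<in> I" and ab: "a < b" and sb: "same_block DS a b" for a b
  proof (rule sb_chain[OF sb])
    show "a \<le> b" using ab by simp
    fix i assume i: "a \<le> i" "i < b" "i \<notin> DS"
    have i1: "i \<in> {1..<n}" using i a b unfolding I_def by auto
    then have "same_block DQ (w i) (w (Suc i))" using i(3) unfolding DS_def Pw_cuts_def by auto
    moreover have "w i \<in> {1..n}" "w (Suc i) \<in> {1..n}" using winI i1 unfolding I_def by auto
    ultimately show "f i = f (Suc i)" using ua unfolding f_def in_a_def by blast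
  qed
  have PF_nonneg: "0 \<le> PF t' t" if t: "t \<in> I" for t' t
  proof (cases "\<exists>a0\<in>I. a0 < t' \<and> same_block DP a0 t \<and> c < w a0")
    case True
    then obtain a0 where a0: "a0 \<in> I" "a0 < t'" "same_block DP a0 t" "c < w a0" by blast
    have split: "(\<Sum>a\<in>I. if same_block DP a t then f a else 0) =
        PF t' t + (\<Sum>a\<in>I. if \<not> a < t' \<and> same_block DP a t then f a else 0)"
      unfolding PF_def sum.distrib[symmetric] by (rule sum.cong) auto
    have "(\<Sum>a\<in>I. if \<not> a < t' \<and> same_block DP a t then f a else 0) \<le> 0"
    proof (rule sum_nonpos)
      fix a assume a: "a \<in> I"
      show "(if \<not> a < t' \<and> same_block DP a t then f a else 0) \<le> 0"
      proof (cases "\<not> a < t' \<and> same_block DP a t")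
        case True
        then have "a0 < a" using a0 by simp
        moreover have "same_block DP a0 a" using sb_trans[OF a0(3) sb_sym'] True by blast
        ultimately have "w a0 < w a" using mono[of a0 a] a a0(1) unfolding I_def by auto
        then have "c < w a" using a0(4) by simp
        then have "u (w a) \<le> 0" using uneg winI[OF a] unfolding I_def by blast
        then show ?thesis using True unfolding f_def by simp
      qed auto
    qed
    moreover have "(\<Sum>a\<in>I. if same_block DP a t then f a else 0) = 0"
      using S0 t unfolding I_def f_def by blast
    ultimately show ?thesis using split by linarith
  next
    case False
    show ?thesis unfolding PF_def
    proof (rule sum_nonneg)
      fix a assume a: "a \<in> I"
      show "0 \<le> (if a < t' \<and> same_block DP a t then f a else 0)"
      proof (cases "a < t' \<and> same_block DP a t")
        case True
        then have "w a \<le> c" using False a by auto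
        then show ?thesis using True upos winI[OF a] unfolding f_def I_def by auto
      qed auto
    qed
  qed
  obtain j where j: "j \<in> I" "0 < u j" using uex unfolding I_def by blast
  define a0 where "a0 = inv_into UNIV w j"
  have a0I: "a0 \<in> I" unfolding a0_def using permutes_in_image[OF permutes_inv[OF wp]] j(1) unfolding I_def by simp
  have wa0: "w a0 = j" unfolding a0_def using permutes_inverses(1)[OF wp] by simp
  have jc: "j \<le> c" using uneg j unfolding I_def by (meson not_le not_less)
  have PF_pos: "0 < PF (Suc a0) a0"
  proof -
    have nn: "\<forall>a\<in>I. 0 \<le> (if a < Suc a0 \<and> same_block DP a a0 then f a else 0)"
    proof
      fix a assume a: "a \<in> I"
      show "0 \<le> (if a < Suc a0 \<and> same_block DP a a0 then f a else 0)"
      proof (cases "a < Suc a0 \<and> same_block DP a a0")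
        case True
        have "w a \<le> w a0"
        proof (cases "a = a0")
          case False
          then have "a < a0" using True by simp
          then show ?thesis using mono[of a a0] True a a0I unfolding I_def by fastforce
        qed auto
        then have "w a \<le> c" using wa0 jc by simp
        then show ?thesis using True upos winI[OF a] unfolding f_def I_def by auto
      qed auto
    qed
    have "(if a0 < Suc a0 \<and> same_block DP a0 a0 then f a0 else 0) \<le> PF (Suc a0) a0"
      unfolding PF_def by (rule member_le_sum[OF a0I]) (use nn fI in auto)
    moreover have "0 < f a0" unfolding f_def using wa0 j by simp
    ultimately show ?thesis by simp
  qed
  have nu_eq: "nu n rc DP DS k = - rho n DP DS k * cc k" if "k \<in> I" for k
    using that unfolding nu_def cc_def I_def by simp
  have rho2: "2 * rho n DP DS k = real (card {b\<in>I. k < b \<and> same_block DP k b \<and> \<not> same_block DS k b})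
      - real (card {a\<in>I. a < k \<and> same_block DP a k \<and> \<not> same_block DS a k})" for k
    unfolding rho_def I_def by simp
  define g where "g k = f k * cc k" for k
  have "(\<Sum>k\<in>I. 2 * rho n DP DS k * g k) =
      (\<Sum>k\<in>I. \<Sum>b\<in>I. if k < b \<and> same_block DP k b \<and> \<not> same_block DS k b then g k else 0)
    - (\<Sum>k\<in>I. \<Sum>a\<in>I. if a < k \<and> same_block DP a k \<and> \<not> same_block DS a k then g k else 0)"
    unfolding rho2 left_diff_distrib sum_subtractf card_sum_if[OF fI] ..
  also have "(\<Sum>k\<in>I. \<Sum>a\<in>I. if a < k \<and> same_block DP a k \<and> \<not> same_block DS a k then g k else 0)
      = (\<Sum>k\<in>I. \<Sum>b\<in>I. if k < b \<and> same_block DP k b \<and> \<not> same_block DS k b then g b else 0)"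
    by (rule sum.swap)
  also have "(\<Sum>k\<in>I. \<Sum>b\<in>I. if k < b \<and> same_block DP k b \<and> \<not> same_block DS k b then g k else 0)
      - (\<Sum>k\<in>I. \<Sum>b\<in>I. if k < b \<and> same_block DP k b \<and> \<not> same_block DS k b then g b else 0)
      = (\<Sum>k\<in>I. \<Sum>b\<in>I. if k < b \<and> same_block DP k b then cc k * f k else 0)
      - (\<Sum>k\<in>I. \<Sum>b\<in>I. if k < b \<and> same_block DP k b then cc k * f b else 0)"
  proof -
    have "(\<Sum>k\<in>I. \<Sum>b\<in>I. if k < b \<and> same_block DP k b \<and> \<not> same_block DS k b then g k else 0)
      - (\<Sum>k\<in>I. \<Sum>b\<in>I. if k < b \<and> same_block DP k b \<and> \<not> same_block DS k b then g b else 0)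
      = (\<Sum>k\<in>I. \<Sum>b\<in>I. if k < b \<and> same_block DP k b \<and> \<not> same_block DS k b then g k - g b else 0)"
      unfolding sum_subtractf[symmetric] by (intro sum.cong refl) auto
    also have "\<dots> = (\<Sum>k\<in>I. \<Sum>b\<in>I. if k < b \<and> same_block DP k b then cc k * f k - cc k * f b else 0)"
    proof (intro sum.cong refl)
      fix k b assume k: "k \<in> I" and b: "b \<in> I"
      show "(if k < b \<and> same_block DP k b \<and> \<not> same_block DS k b then g k - g b else 0) =
            (if k < b \<and> same_block DP k b then cc k * f k - cc k * f b else 0)"
      proof (cases "k < b \<and> same_block DP k b")
        case True
        have cb: "cc b = cc k" using ccbl[OF k b] True by simp
        show ?thesis
        proof (cases "same_block DS k b")
          case True2: True
          have "f k = f b" using pw_eq[OF k b] True True2 by blast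
          then show ?thesis using True True2 by simp
        next
          case False
          then show ?thesis using True cb unfolding g_def by (simp add: mult.commute)
        qed
      qed auto
    qed
    also have "\<dots> = (\<Sum>k\<in>I. \<Sum>b\<in>I. if k < b \<and> same_block DP k b then cc k * f k else 0)
      - (\<Sum>k\<in>I. \<Sum>b\<in>I. if k < b \<and> same_block DP k b then cc k * f b else 0)"
      unfolding sum_subtractf[symmetric] by (intro sum.cong refl) auto
    finally show ?thesis .
  qed
  also have "(\<Sum>k\<in>I. \<Sum>b\<in>I. if k < b \<and> same_block DP k b then cc k * f k else 0) = (\<Sum>b\<in>I. cc b * PF b b)"
  proof -
    have "(\<Sum>k\<in>I. \<Sum>b\<in>I. if k < b \<and> same_block DP k b then cc k * f k else 0)
        = (\<Sum>b\<in>I. \<Sum>k\<in>I. if k < b \<and> same_block DP k b then cc k * f k else 0)" by (rule sum.swap)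
    also have "\<dots> = (\<Sum>b\<in>I. \<Sum>k\<in>I. cc b * (if k < b \<and> same_block DP k b then f k else 0))"
    proof (intro sum.cong refl)
      fix b k assume b: "b \<in> I" and k: "k \<in> I"
      show "(if k < b \<and> same_block DP k b then cc k * f k else 0) = cc b * (if k < b \<and> same_block DP k b then f k else 0)"
      proof (cases "k < b \<and> same_block DP k b")
        case True
        then have "cc k = cc b" using ccbl[OF k b] by blast
        then show ?thesis using True by simp
      qed auto
    qed
    also have "\<dots> = (\<Sum>b\<in>I. cc b * PF b b)" unfolding PF_def by (simp add: sum_distrib_left)
    finally show ?thesis .
  qed
  also have "(\<Sum>k\<in>I. \<Sum>b\<in>I. if k < b \<and> same_block DP k b then cc k * f b else 0) = (\<Sum>k\<in>I. cc k * (- PF (Suc k) k))"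
  proof (rule sum.cong[OF refl])
    fix k assume k: "k \<in> I"
    have sp: "(\<Sum>b\<in>I. if same_block DP b k then f b else 0) =
        (\<Sum>b\<in>I. if k < b \<and> same_block DP k b then f b else 0) + PF (Suc k) k"
      unfolding PF_def sum.distrib[symmetric]
    proof (rule sum.cong[OF refl])
      fix b assume "b \<in> I"
      have e: "same_block DP k b = same_block DP b k" by (rule sb_sym)
      have e2: "(k < b) = (\<not> b < Suc k)" by auto
      show "(if same_block DP b k then f b else 0) =
          (if k < b \<and> same_block DP k b then f b else 0) + (if b < Suc k \<and> same_block DP b k then f b else 0)"
        unfolding e e2 by auto
    qed
    have "(\<Sum>b\<in>I. if same_block DP b k then f b else 0) = 0" using S0 k unfolding I_def f_def by blast
    then have "(\<Sum>b\<in>I. if k < b \<and> same_block DP k b then f b else 0) = - PF (Suc k) k" using sp by linarith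
    then show "(\<Sum>b\<in>I. if k < b \<and> same_block DP k b then cc k * f b else 0) = cc k * (- PF (Suc k) k)"
    proof -
      assume h: "(\<Sum>b\<in>I. if k < b \<and> same_block DP k b then f b else 0) = - PF (Suc k) k"
      have "(\<Sum>b\<in>I. if k < b \<and> same_block DP k b then cc k * f b else 0)
          = cc k * (\<Sum>b\<in>I. if k < b \<and> same_block DP k b then f b else 0)"
        unfolding sum_distrib_left by (rule sum.cong) auto
      then show ?thesis using h by simp
    qed
  qed
  also have "(\<Sum>b\<in>I. cc b * PF b b) - (\<Sum>k\<in>I. cc k * (- PF (Suc k) k)) = (\<Sum>k\<in>I. cc k * (PF k k + PF (Suc k) k))"
    unfolding sum_subtractf[symmetric] by (rule sum.cong) (simp_all add: algebra_simps)
  finally have main: "(\<Sum>k\<in>I. 2 * rho n DP DS k * g k) = (\<Sum>k\<in>I. cc k * (PF k k + PF (Suc k) k))" .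
  have "cc a0 * (PF a0 a0 + PF (Suc a0) a0) \<le> (\<Sum>k\<in>I. cc k * (PF k k + PF (Suc k) k))"
  proof (rule member_le_sum[OF a0I])
    fix x assume x: "x \<in> I - {a0}"
    have "0 < cc x" "0 \<le> PF x x" "0 \<le> PF (Suc x) x" using ccpos PF_nonneg x by auto
    then show "0 \<le> cc x * (PF x x + PF (Suc x) x)" by simp
  qed (rule fI)
  moreover have "0 < cc a0 * (PF a0 a0 + PF (Suc a0) a0)"
    using ccpos[OF a0I] PF_pos PF_nonneg[OF a0I] by (simp add: add_nonneg_pos)
  ultimately have pos: "0 < (\<Sum>k\<in>I. 2 * rho n DP DS k * g k)" using main by linarith
  have "(\<Sum>k\<in>I. nu n rc DP DS k * u (w k)) = - (\<Sum>k\<in>I. 2 * rho n DP DS k * g k) / 2"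
  proof -
    have "(\<Sum>k\<in>I. nu n rc DP DS k * u (w k)) = (\<Sum>k\<in>I. - (2 * rho n DP DS k * g k) / 2)"
      by (rule sum.cong) (auto simp: nu_eq g_def f_def)
    also have "\<dots> = - (\<Sum>k\<in>I. 2 * rho n DP DS k * g k) / 2"
      by (simp add: sum_divide_distrib sum_negf)
    finally show ?thesis .
  qed
  then show ?thesis using pos unfolding I_def DS_def by simp
qed


lemma reindex_perm:
  assumes wp: "w permutes I"
  shows "(\<Sum>j\<in>I. h (inv_into UNIV w j) j) = (\<Sum>k\<in>I. h k (w k))"
proof -
  have "(\<Sum>k\<in>I. h k (w k)) = (\<Sum>k\<in>I. (\<lambda>j. h (inv_into UNIV w j) j) (w k))"
    using permutes_inverses(2)[OF wp] by simp
  also have "\<dots> = (\<Sum>j\<in>I. h (inv_into UNIV w j) j)"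
    by (rule sum.reindex_bij_betw[OF permutes_imp_bij[OF wp]])
  finally show ?thesis by simp
qed

lemma cpair_re_im:
  "Re (cpair n (\<lambda>j. \<i> * complex_of_real (A j) + complex_of_real (B j)) u) = (\<Sum>j=1..n. B j * u j)"
  "Im (cpair n (\<lambda>j. \<i> * complex_of_real (A j) + complex_of_real (B j)) u) = (\<Sum>j=1..n. A j * u j)"
  unfolding cpair_def by (simp_all add: Re_sum Im_sum)

lemma cpair_nz:
  assumes "(\<Sum>j=1..n. B j * u j) \<noteq> 0 \<or> (\<Sum>j=1..n. A j * u j) \<noteq> 0"
  shows "cpair n (\<lambda>j. \<i> * complex_of_real (A j) + complex_of_real (B j)) u \<noteq> 0"
  using assms cpair_re_im[of n A B u] by auto

lemma S0_lemma:
  assumes wp: "w permutes {1..n}" and usum: "(\<Sum>j=1..n. u j) = 0"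
    and hb: "\<And>x. in_aG n DP x \<Longrightarrow> (\<Sum>j=1..n. x (inv_into UNIV w j) * u j) = 0"
    and t: "t \<in> {1..n}"
  shows "(\<Sum>a\<in>{1..n}. if same_block DP a t then u (w a) else 0) = 0"
proof -
  define m where "m = real (card {k\<in>{1..n}. same_block DP k t}) / real n"
  define x where "x k = (if k \<in> {1..n} then (if same_block DP k t then 1 else 0) - m else 0)" for k
  have n0: "0 < n" using t by simp
  have xa: "in_aG n DP x" unfolding in_aG_def in_a_def
  proof (intro conjI allI impI)
    fix k assume k: "k \<notin> {1..n}" show "x k = 0" unfolding x_def by (simp only: if_not_P[OF k])
  next
    fix k l assume k: "k \<in> {1..n}" and l: "l \<in> {1..n}" and sb: "same_block DP k l"
    have "same_block DP k t \<longleftrightarrow> same_block DP l t"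
      using sb_trans[OF sb] sb_trans[OF sb_sym'[OF sb]] by blast
    then show "x k = x l" unfolding x_def using k l by simp
  next
    have "(\<Sum>l=1..n. x l) = (\<Sum>l=1..n. (if same_block DP l t then 1 else 0) - m)"
      unfolding x_def by (rule sum.cong) auto
    also have "\<dots> = real (card {k\<in>{1..n}. same_block DP k t}) - real n * m"
      by (simp add: sum_subtractf sum.inter_filter[symmetric])
    also have "\<dots> = 0" unfolding m_def using n0 by simp
    finally show "(\<Sum>l=1..n. x l) = 0" .
  qed
  have "0 = (\<Sum>j=1..n. x (inv_into UNIV w j) * u j)" using hb[OF xa] by simp
  also have "\<dots> = (\<Sum>k=1..n. x k * u (w k))" by (rule reindex_perm[OF wp])
  also have "\<dots> = (\<Sum>k=1..n. (if same_block DP k t then u (w k) else 0) - m * u (w k))"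
    unfolding x_def by (rule sum.cong) (auto simp: algebra_simps)
  also have "\<dots> = (\<Sum>k=1..n. if same_block DP k t then u (w k) else 0) - m * (\<Sum>k=1..n. u (w k))"
    by (simp add: sum_subtractf sum_distrib_left)
  also have "(\<Sum>k=1..n. u (w k)) = 0"
    using reindex_perm[OF wp, of "\<lambda>k j. u j"] usum by simp
  finally show ?thesis by simp
qed

lemma aG_comb:
  assumes x: "in_aG n D x" and y: "in_aG n D y"
  shows "in_aG n D (\<lambda>k. x k + s * y k)"
  unfolding in_aG_def in_a_def
proof (intro conjI allI impI)
  fix k assume k: "k \<notin> {1..n}"
  have "x k = 0" "y k = 0" using x y k unfolding in_aG_def in_a_def by blast+
  then show "x k + s * y k = 0" by simp
next
  fix k l assume "k \<in> {1..n}" "l \<in> {1..n}" "same_block D k l"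
  then have "x k = x l" "y k = y l" using x y unfolding in_aG_def in_a_def by blast+
  then show "x k + s * y k = x l + s * y l" by simp
next
  have "(\<Sum>l=1..n. x l) = 0" "(\<Sum>l=1..n. y l) = 0" using x y unfolding in_aG_def by blast+
  then show "(\<Sum>l=1..n. x l + s * y l) = 0" by (simp add: sum.distrib sum_distrib_left[symmetric])
qed

lemma aG_zero: "in_aG n D (\<lambda>_. 0)"
  unfolding in_aG_def in_a_def by simp

theorem mainTheorem10:
  fixes rd :: "(nat \<times> nat) list" and DQ DR :: "nat set" and w w' :: "nat \<Rightarrow> nat"
    and n :: nat and DP Dpi :: "nat set" and rc :: "nat \<Rightarrow> nat"
  defines "n \<equiv> sum_list (compP rd)"
    and "DP \<equiv> cuts_of (compP rd)"
    and "Dpi \<equiv> cuts_of (compPpi rd)"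
    and "rc \<equiv> rcoord rd"
  assumes "rd \<noteq> []"
    and "\<forall>(r, d) \<in> set rd. 0 < r \<and> 0 < d"
    and "DQ \<subseteq> {1..<n}" and "DR \<subseteq> DQ"
    and "inQWP n DQ DP w" and "inQWP n DQ DP w'"
    and "Pw_cuts n DP DQ w \<union> Pw_cuts n DP DQ w' \<subseteq> Dpi"
  shows "\<exists>lam lam'. in_iaG n DP lam \<and> in_iaG n DP lam' \<and>
    (let \<mu> = (\<lambda>j. act w lam j + act w' lam' j
                 + complex_of_real (act w (nu n rc DP (Pw_cuts n DP DQ w)) j)
                 + complex_of_real (act w' (nu n rc DP (Pw_cuts n DP DQ w')) j))
     in theta_hat n DQ DR \<mu> * theta n DR \<mu> \<noteq> 0)"
proof -
  have rdpos: "\<forall>(r, d) \<in> set rd. 0 < r \<and> 0 < d" using assms(6) .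
  have DQ: "DQ \<subseteq> {1..<n}" using assms(7) .
  have DR: "DR \<subseteq> DQ" using assms(8) .
  have DR': "DR \<subseteq> {1..<n}" using DQ DR by blast
  have fDQ: "finite DQ" using DQ finite_subset by blast
  have fDR: "finite DR" using DR' finite_subset by blast
  have wp: "w permutes {1..n}" and wmono: "\<And>i j. 1 \<le> i \<Longrightarrow> i < j \<Longrightarrow> j \<le> n \<Longrightarrow> same_block DP i j \<Longrightarrow> w i < w j"
    using assms(9) unfolding inQWP_def by blast+
  have wp': "w' permutes {1..n}" and wmono': "\<And>i j. 1 \<le> i \<Longrightarrow> i < j \<Longrightarrow> j \<le> n \<Longrightarrow> same_block DP i j \<Longrightarrow> w' i < w' j"
    using assms(10) unfolding inQWP_def by blast+
  have rcpos: "0 < rc a" if "a \<in> {1..n}" for a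
  proof -
    have "1 \<le> a" "a \<le> sum_list (compP rd)" using that unfolding n_def by auto
    then show ?thesis unfolding rc_def using rcoord_props(2)[OF rdpos] by blast
  qed
  have rcbl: "rc a = rc b" if "a \<in> {1..n}" "b \<in> {1..n}" "same_block DP a b" for a b
  proof -
    have "1 \<le> a" "a \<le> sum_list (compP rd)" "1 \<le> b" "b \<le> sum_list (compP rd)" "same_block (cuts_of (compP rd)) a b"
      using that unfolding n_def DP_def by auto
    then show ?thesis unfolding rc_def using rcoord_props(1)[OF rdpos] by blast
  qed
  define Vs where "Vs = coweight n DQ DR ` (DQ - DR) \<union> coroot n DR ` DR"
  have Vgood: "\<exists>c. good n DQ c u" if "u \<in> Vs" for u
    using that good_cw[OF DQ DR] good_coroot[OF DQ DR] unfolding Vs_def by auto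
  have finVs: "finite Vs" unfolding Vs_def using fDQ fDR by simp
  define V where "V = {p :: (nat \<Rightarrow> real) \<times> (nat \<Rightarrow> real). in_aG n DP (fst p) \<and> in_aG n DP (snd p)}"
  define bf where "bf u p = (\<Sum>j=1..n. (fst p (inv_into UNIV w j) + snd p (inv_into UNIV w' j)) * u j)"
    for u :: "nat \<Rightarrow> real" and p :: "(nat \<Rightarrow> real) \<times> (nat \<Rightarrow> real)"
  define Cm where "Cm p q s = ((\<lambda>k. fst p k + s * fst q k), (\<lambda>k. snd p k + s * snd q k))"
    for p q :: "(nat \<Rightarrow> real) \<times> (nat \<Rightarrow> real)" and s :: real
  define Ib where "Ib = {u\<in>Vs. \<exists>q\<in>V. bf u q \<noteq> 0}"
  have "\<exists>p\<in>V. \<forall>u\<in>Ib. bf u p \<noteq> 0"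
  proof (rule avoid_finite[of Ib "(\<lambda>_. 0, \<lambda>_. 0)" V Cm bf])
    show "finite Ib" unfolding Ib_def using finVs by simp
    show "(\<lambda>_. 0, \<lambda>_. 0) \<in> V" unfolding V_def using aG_zero by simp
    show "Cm p q s \<in> V" if "p \<in> V" "q \<in> V" for p q s
      using that aG_comb unfolding V_def Cm_def by simp
    show "bf u (Cm p q s) = bf u p + s * bf u q" for u p q s
      unfolding bf_def Cm_def by (simp add: algebra_simps sum.distrib sum_distrib_left)
    show "\<exists>q\<in>V. bf u q \<noteq> 0" if "u \<in> Ib" for u using that unfolding Ib_def by blast
  qed
  then obtain p where pV: "p \<in> V" and pnz: "\<forall>u\<in>Ib. bf u p \<noteq> 0" by blast
  obtain x x' where pxx: "p = (x, x')" by (cases p)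
  have xa: "in_aG n DP x" and xa': "in_aG n DP x'" using pV pxx unfolding V_def by auto
  define nw where "nw = nu n rc DP (Pw_cuts n DP DQ w)"
  define nw' where "nw' = nu n rc DP (Pw_cuts n DP DQ w')"
  define B where "B j = act w nw j + act w' nw' j" for j
  define A where "A j = x (inv_into UNIV w j) + x' (inv_into UNIV w' j)" for j
  have key: "cpair n (\<lambda>j. \<i> * complex_of_real (A j) + complex_of_real (B j)) u \<noteq> 0" if uV: "u \<in> Vs" for u
  proof (rule cpair_nz)
    obtain c where gd: "good n DQ c u" using Vgood[OF uV] by blast
    show "(\<Sum>j=1..n. B j * u j) \<noteq> 0 \<or> (\<Sum>j=1..n. A j * u j) \<noteq> 0"
    proof (cases "u \<in> Ib")
      case True
      then have "bf u p \<noteq> 0" using pnz by blast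
      moreover have "bf u p = (\<Sum>j=1..n. A j * u j)" unfolding bf_def A_def pxx by simp
      ultimately show ?thesis by simp
    next
      case False
      then have b0: "\<forall>q\<in>V. bf u q = 0" using uV unfolding Ib_def by blast
      have usum: "(\<Sum>j=1..n. u j) = 0" using gd unfolding good_def by blast
      have hb: "(\<Sum>j=1..n. y (inv_into UNIV w j) * u j) = 0" if y: "in_aG n DP y" for y
      proof -
        have "(y, \<lambda>_. 0) \<in> V" unfolding V_def using y aG_zero by simp
        then have "bf u (y, \<lambda>_. 0) = 0" using b0 by blast
        then show ?thesis unfolding bf_def by simp
      qed
      have hb': "(\<Sum>j=1..n. y (inv_into UNIV w' j) * u j) = 0" if y: "in_aG n DP y" for y
      proof -
        have "(\<lambda>_. 0, y) \<in> V" unfolding V_def using y aG_zero by simp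
        then have "bf u (\<lambda>_. 0, y) = 0" using b0 by blast
        then show ?thesis unfolding bf_def by simp
      qed
      have n1: "(\<Sum>k\<in>{1..n}. nw k * u (w k)) < 0"
        unfolding nw_def by (rule neg_part[OF wp wmono rcpos rcbl gd S0_lemma[OF wp usum hb]]) auto
      have n2: "(\<Sum>k\<in>{1..n}. nw' k * u (w' k)) < 0"
        unfolding nw'_def by (rule neg_part[OF wp' wmono' rcpos rcbl gd S0_lemma[OF wp' usum hb']]) auto
      have "(\<Sum>j=1..n. B j * u j) = (\<Sum>j=1..n. nw (inv_into UNIV w j) * u j) + (\<Sum>j=1..n. nw' (inv_into UNIV w' j) * u j)"
        unfolding B_def act_def by (simp add: algebra_simps sum.distrib)
      also have "\<dots> = (\<Sum>k\<in>{1..n}. nw k * u (w k)) + (\<Sum>k\<in>{1..n}. nw' k * u (w' k))"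
        using reindex_perm[OF wp, of "\<lambda>k j. nw k * u j"] reindex_perm[OF wp', of "\<lambda>k j. nw' k * u j"] by simp
      finally have "(\<Sum>j=1..n. B j * u j) < 0" using n1 n2 by linarith
      then show ?thesis by simp
    qed
  qed
  define M where "M = (\<lambda>j. \<i> * complex_of_real (A j) + complex_of_real (B j))"
  have cov1: "covol n (DQ - DR) (coweight n DQ DR) \<noteq> 0"
  proof -
    have "gram_det n (DQ - DR) (coweight n DQ DR) \<noteq> 0"
    proof (rule gram_nz[where N = n and g = alpha])
      show "DQ - DR \<subseteq> {..<n}" using DQ by auto
      fix c d assume c: "c \<in> DQ - DR" and d: "d \<in> DQ - DR"
      show "rpair n (alpha d) (coweight n DQ DR c) = (if c = d then 1 else 0)"
        using coweight_eq[OF DQ DR, of c] cw_pair[OF DQ DR, of c d] c d by auto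
    qed
    then show ?thesis unfolding covol_def by simp
  qed
  have cov2: "covol n DR (coroot n DR) \<noteq> 0"
  proof -
    have "gram_det n DR (coroot n DR) \<noteq> 0"
    proof (rule gram_nz[where N = n and g = "\<lambda>d. coweight n DR {} d"])
      show "DR \<subseteq> {..<n}" using DR' by auto
      fix c d assume c: "c \<in> DR" and d: "d \<in> DR"
      show "rpair n (coweight n DR {} d) (coroot n DR c) = (if c = d then 1 else 0)"
        using coroot_dual[OF DR' c d] .
    qed
    then show ?thesis unfolding covol_def by simp
  qed
  have th1: "theta_hat n DQ DR M \<noteq> 0"
  proof -
    have "(\<Prod>c\<in>DQ - DR. cpair n M (coweight n DQ DR c)) \<noteq> 0"
    proof -
      have "\<forall>c\<in>DQ - DR. cpair n M (coweight n DQ DR c) \<noteq> 0"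
        using key unfolding M_def Vs_def by blast
      then show ?thesis using fDQ by (simp add: prod_zero_iff)
    qed
    then show ?thesis unfolding theta_hat_def using cov1 by simp
  qed
  have th2: "theta n DR M \<noteq> 0"
  proof -
    have "(\<Prod>c\<in>DR. cpair n M (coroot n DR c)) \<noteq> 0"
    proof -
      have "\<forall>c\<in>DR. cpair n M (coroot n DR c) \<noteq> 0"
        using key unfolding M_def Vs_def by blast
      then show ?thesis using fDR by (simp add: prod_zero_iff)
    qed
    then show ?thesis unfolding theta_def using cov2 by simp
  qed
  have Meq: "(\<lambda>j. act w (\<lambda>j. \<i> * complex_of_real (x j)) j + act w' (\<lambda>j. \<i> * complex_of_real (x' j)) j
                 + complex_of_real (act w (nu n rc DP (Pw_cuts n DP DQ w)) j)
                 + complex_of_real (act w' (nu n rc DP (Pw_cuts n DP DQ w')) j)) = M"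
    unfolding M_def A_def B_def nw_def nw'_def act_def by (auto simp: fun_eq_iff algebra_simps)
  show ?thesis
  proof (intro exI conjI)
    show "in_iaG n DP (\<lambda>j. \<i> * complex_of_real (x j))" unfolding in_iaG_def using xa by blast
    show "in_iaG n DP (\<lambda>j. \<i> * complex_of_real (x' j))" unfolding in_iaG_def using xa' by blast
    show "let \<mu> = (\<lambda>j. act w (\<lambda>j. \<i> * complex_of_real (x j)) j + act w' (\<lambda>j. \<i> * complex_of_real (x' j)) j
                 + complex_of_real (act w (nu n rc DP (Pw_cuts n DP DQ w)) j)
                 + complex_of_real (act w' (nu n rc DP (Pw_cuts n DP DQ w')) j))
     in theta_hat n DQ DR \<mu> * theta n DR \<mu> \<noteq> 0"
      unfolding Let_def Meq using th1 th2 by simp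
  qed
qed

end
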